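(* Let $W_{\mathfrak{krv}}=\nu(V_{\mathfrak{krv}})$. Then $W_{\mathfrak{krv}}$ is closed under the Poisson bracket $\{f,g\}=[f,g]+d_f(g)-d_g(f)$ and is a Lie algebra under it.
   Context: Let $\mathfrak{lie}_2$ be the degree-completed free Lie algebra over $\mathbb{Q}$ on $x,y$ inside $\mathrm{Ass}_2=\mathbb{Q}\langle\langle x,y\rangle\rangle$; write $f=c+f_xx+f_yy$. For $a,b\in\mathfrak{lie}_2$ ($a$ without linear $x$-term, $b$ without linear $y$-term), $E_{a,b}$ is the derivation $x\mapsto[x,a]$, $y\mapsto[y,b]$; $\mathfrak{sder}_2$ consists of those with $[x,a]+[y,b]=0$. With $\mathrm{tr}$ the projection of $\mathrm{Ass}_2$ onto its quotient by cyclic permutation of words and $\mathrm{div}(E_{a,b})=\mathrm{tr}(a_xx+b_yy)$, $\mathfrak{krv}$ is the weight-$\ge3$ part of the Lie algebra of $E_{a,b}\in\mathfrak{sder}_2$ with $\mathrm{div}(E_{a,b})=\mathrm{tr}(h(x+y)-h(x)-h(y))$ for some one-variable power series $h$ of degree $\ge2$. $V_{\mathfrak{krv}}$ is the space of $b$ such that $E_{a,b}\in\mathfrak{krv}$ for some $a$ (the map $E_{a,b}\mapsto b$ being a linear isomorphism $\mathfrak{krv}\to V_{\mathfrak{krv}}$). $\nu$ is the automorphism of $\mathrm{Ass}_2$ with $\nu(x)=-x-y$, $\nu(y)=y$. For $f\in\mathfrak{lie}_2$, $d_f$ is the derivation with $d_f(x)=0$, $d_f(y)=[y,f]$. *)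

theory Defs
  imports Complex_Main "HOL-Library.Function_Algebras"
begin

text \<open>Elements of the completed free associative algebra Ass_2 = Q<<x,y>> are
  represented as arbitrary coefficient functions on words in the letters x, y
  (no finiteness condition = degree completion). Addition, subtraction, zero and
  finite sums are the pointwise ones (from Function_Algebras); the algebra
  product is smul (concatenation product), NOT the pointwise times.\<close>

datatype letter = X | Y

type_synonym ser = "letter list \<Rightarrow> rat"

definition ssc :: "rat \<Rightarrow> ser \<Rightarrow> ser" where
  "ssc c f = (\<lambda>w. c * f w)"

definition smul :: "ser \<Rightarrow> ser \<Rightarrow> ser" where
  "smul f g = (\<lambda>w. \<Sum>k\<le>length w. f (take k w) * g (drop k w))"

definition sbr :: "ser \<Rightarrow> ser \<Rightarrow> ser" where
  "sbr f g = smul f g - smul g f"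

definition word :: "letter list \<Rightarrow> ser" where
  "word u = (\<lambda>v. if v = u then 1 else 0)"

definition one :: ser where "one = word []"

definition gen :: "letter \<Rightarrow> ser" where
  "gen l = word [l]"

inductive_set lie_poly :: "ser set" where
  gen_in: "gen l \<in> lie_poly"
| add_in: "f \<in> lie_poly \<Longrightarrow> g \<in> lie_poly \<Longrightarrow> f + g \<in> lie_poly"
| sc_in: "f \<in> lie_poly \<Longrightarrow> ssc c f \<in> lie_poly"
| br_in: "f \<in> lie_poly \<Longrightarrow> g \<in> lie_poly \<Longrightarrow> sbr f g \<in> lie_poly"

definition homog :: "nat \<Rightarrow> ser \<Rightarrow> ser" where
  "homog n f = (\<lambda>w. if length w = n then f w else 0)"

definition lie2 :: "ser set" where
  "lie2 = {f. \<forall>n. homog n f \<in> lie_poly}"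

text \<open>For f = c + f_x x + f_y y, rcoef f l is f_l.\<close>
definition rcoef :: "ser \<Rightarrow> letter \<Rightarrow> ser" where
  "rcoef f l = (\<lambda>w. f (w @ [l]))"

text \<open>Continuous derivation of Ass_2 with prescribed values on the letters
  (values without constant term, so the defining sum is finite coefficientwise).\<close>
definition der_word :: "(letter \<Rightarrow> ser) \<Rightarrow> letter list \<Rightarrow> ser" where
  "der_word \<delta> u = (\<Sum>i<length u. smul (smul (word (take i u)) (\<delta> (u ! i))) (word (drop (Suc i) u)))"

definition der :: "(letter \<Rightarrow> ser) \<Rightarrow> ser \<Rightarrow> ser" where
  "der \<delta> f = (\<lambda>v. \<Sum>u\<in>{u. length u \<le> length v}. f u * der_word \<delta> u v)"

text \<open>Continuous algebra endomorphism with prescribed values on the letters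
  (values without constant term).\<close>
definition subst_word :: "(letter \<Rightarrow> ser) \<Rightarrow> letter list \<Rightarrow> ser" where
  "subst_word \<sigma> u = foldr (\<lambda>l acc. smul (\<sigma> l) acc) u one"

definition subst :: "(letter \<Rightarrow> ser) \<Rightarrow> ser \<Rightarrow> ser" where
  "subst \<sigma> f = (\<lambda>v. \<Sum>u\<in>{u. length u \<le> length v}. f u * subst_word \<sigma> u v)"

definition nu :: "ser \<Rightarrow> ser" where
  "nu = subst (\<lambda>l. case l of X \<Rightarrow> - gen X - gen Y | Y \<Rightarrow> gen Y)"

definition E :: "ser \<Rightarrow> ser \<Rightarrow> ser \<Rightarrow> ser" where
  "E a b = der (\<lambda>l. case l of X \<Rightarrow> sbr (gen X) a | Y \<Rightarrow> sbr (gen Y) b)"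

definition d :: "ser \<Rightarrow> ser \<Rightarrow> ser" where
  "d f = der (\<lambda>l. case l of X \<Rightarrow> 0 | Y \<Rightarrow> sbr (gen Y) f)"

text \<open>tr: projection to the quotient by cyclic permutation of words; the class
  of f is represented by the function assigning to each word w the sum of the
  coefficients of f over the cyclic class of w.\<close>
definition trace :: "ser \<Rightarrow> ser" where
  "trace f = (\<lambda>w. \<Sum>v\<in>{rotate k w | k. True}. f v)"

definition divE :: "ser \<Rightarrow> ser \<Rightarrow> ser" where
  "divE a b = trace (smul (rcoef a X) (gen X) + smul (rcoef b Y) (gen Y))"

definition spow :: "ser \<Rightarrow> nat \<Rightarrow> ser" where
  "spow g n = (smul g ^^ n) one"

text \<open>Evaluation of a one-variable power series h = sum_n h_n t^n at g (g without constant term).\<close>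
definition peval :: "(nat \<Rightarrow> rat) \<Rightarrow> ser \<Rightarrow> ser" where
  "peval h g = (\<lambda>v. \<Sum>n\<le>length v. h n * spow g n v)"

text \<open>Membership of E_{a,b} in krv, stated on the pair (a,b) (E_{a,b} determines (a,b)).\<close>
definition krv_pair :: "ser \<Rightarrow> ser \<Rightarrow> bool" where
  "krv_pair a b \<longleftrightarrow>
     a \<in> lie2 \<and> b \<in> lie2 \<and> a [X] = 0 \<and> b [Y] = 0 \<and>
     sbr (gen X) a + sbr (gen Y) b = 0 \<and>
     (\<exists>h::nat \<Rightarrow> rat. h 0 = 0 \<and> h 1 = 0 \<and>
        divE a b = trace (peval h (gen X + gen Y) - peval h (gen X) - peval h (gen Y))) \<and>
     (\<forall>w. length w < 3 \<longrightarrow> a w = 0 \<and> b w = 0)"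

definition V_krv :: "ser set" where
  "V_krv = {b. \<exists>a. krv_pair a b}"

definition W_krv :: "ser set" where
  "W_krv = nu ` V_krv"

definition poisson :: "ser \<Rightarrow> ser \<Rightarrow> ser" where
  "poisson f g = sbr f g + d f g - d g f"

definition lie_algebra_on :: "ser set \<Rightarrow> (ser \<Rightarrow> ser \<Rightarrow> ser) \<Rightarrow> bool" where
  "lie_algebra_on W br \<longleftrightarrow>
     0 \<in> W \<and> (\<forall>f\<in>W. \<forall>g\<in>W. f + g \<in> W) \<and> (\<forall>c. \<forall>f\<in>W. ssc c f \<in> W) \<and>
     (\<forall>f\<in>W. \<forall>g\<in>W. br f g \<in> W) \<and>
     (\<forall>f\<in>W. \<forall>g\<in>W. \<forall>h\<in>W. br (f + g) h = br f h + br g h \<and> br h (f + g) = br h f + br h g) \<and>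
     (\<forall>c. \<forall>f\<in>W. \<forall>g\<in>W. br (ssc c f) g = ssc c (br f g) \<and> br f (ssc c g) = ssc c (br f g)) \<and>
     (\<forall>f\<in>W. br f f = 0) \<and>
     (\<forall>f\<in>W. \<forall>g\<in>W. \<forall>h\<in>W. br f (br g h) + br g (br h f) + br h (br f g) = 0)"

end

theory Submission
  imports Defs
begin

instance letter :: finite
proof
  have "(UNIV::letter set) = {X, Y}" using letter.exhaust by auto
  then show "finite (UNIV::letter set)" by (metis finite.emptyI finite.insertI)
qed

lemma sum_fun_apply: "finite A \<Longrightarrow> (sum F A) w = (\<Sum>x\<in>A. F x w)"
  by (induction A rule: finite_induct) auto

lemma sum_fun_apply': "(sum F A) w = (\<Sum>x\<in>A. F x w)"
  by (cases "finite A") (auto simp: sum_fun_apply)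

lemma finite_le: "finite {u::letter list. length u \<le> n}"
  using finite_lists_length_le[of "UNIV::letter set" n] by simp

section \<open>Scalar and product basics\<close>

lemma ssc_apply[simp]: "ssc c f w = c * f w" by (simp add: ssc_def)

lemma smul_apply: "smul f g w = (\<Sum>k\<le>length w. f (take k w) * g (drop k w))"
  by (simp add: smul_def)

lemma smul_add_left[simp]: "smul (f + g) h = smul f h + smul g h"
  by (rule ext) (simp add: smul_def distrib_right sum.distrib)
lemma smul_add_right[simp]: "smul f (g + h) = smul f g + smul f h"
  by (rule ext) (simp add: smul_def distrib_left sum.distrib)
lemma smul_diff_left[simp]: "smul (f - g) h = smul f h - smul g h"
  by (rule ext) (simp add: smul_def left_diff_distrib sum_subtractf)
lemma smul_diff_right[simp]: "smul f (g - h) = smul f g - smul f h"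
  by (rule ext) (simp add: smul_def right_diff_distrib sum_subtractf)
lemma smul_uminus_left[simp]: "smul (- f) h = - smul f h"
  by (rule ext) (simp add: smul_def sum_negf)
lemma smul_uminus_right[simp]: "smul f (- h) = - smul f h"
  by (rule ext) (simp add: smul_def sum_negf)
lemma smul_zero_left[simp]: "smul 0 h = 0"
  by (rule ext) (simp add: smul_def)
lemma smul_zero_right[simp]: "smul f 0 = 0"
  by (rule ext) (simp add: smul_def)
lemma smul_ssc_left[simp]: "smul (ssc c f) h = ssc c (smul f h)"
  by (rule ext) (simp add: smul_def sum_distrib_left mult.assoc)
lemma smul_ssc_right[simp]: "smul f (ssc c h) = ssc c (smul f h)"
  by (rule ext) (simp add: smul_def sum_distrib_left mult.left_commute)
lemma smul_sum_left: "smul (sum F A) h = (\<Sum>x\<in>A. smul (F x) h)"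
proof (induction A rule: infinite_finite_induct)
  case (insert x B)
  then show ?case by (simp only: sum.insert[OF insert(1,2)] smul_add_left insert(3))
qed (simp_all only: sum.empty sum.infinite smul_zero_left smul_zero_right not_False_eq_True)
lemma smul_sum_right: "smul h (sum F A) = (\<Sum>x\<in>A. smul h (F x))"
proof (induction A rule: infinite_finite_induct)
  case (insert x B)
  then show ?case by (simp only: sum.insert[OF insert(1,2)] smul_add_right insert(3))
qed (simp_all only: sum.empty sum.infinite smul_zero_left smul_zero_right not_False_eq_True)

lemma ssc_add[simp]: "ssc c (f + g) = ssc c f + ssc c g"
  by (rule ext) (simp add: distrib_left)
lemma ssc_diff[simp]: "ssc c (f - g) = ssc c f - ssc c g"
  by (rule ext) (simp add: right_diff_distrib)
lemma ssc_zero[simp]: "ssc c 0 = 0" "ssc 0 f = 0" "ssc 1 f = f"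
  by (auto simp: ssc_def)
lemma ssc_ssc[simp]: "ssc c (ssc c' f) = ssc (c * c') f"
  by (rule ext) simp
lemma ssc_uminus[simp]: "ssc c (- f) = - ssc c f"
  by (rule ext) simp

lemma smul_assoc: "smul (smul f g) h = smul f (smul g h)"
proof (rule ext)
  fix w :: "letter list"
  define n where "n = length w"
  define F where "F = (\<lambda>j i. f (take j w) * g (take i (drop j w)) * h (drop (j+i) w))"
  have "smul (smul f g) h w = (\<Sum>k\<le>n. \<Sum>j\<le>k. F j (k - j))"
    unfolding smul_apply n_def F_def
    by (auto simp: sum_distrib_right min_def take_drop intro!: sum.cong)
  also have "\<dots> = (\<Sum>(j,i)\<in>{(j,i). j+i \<le> n}. F j i)"
    by (rule sum.triangle_reindex_eq[symmetric])
  also have "\<dots> = (\<Sum>j\<le>n. \<Sum>i\<le>n - j. F j i)"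
  proof -
    have "{(j,i). j+i \<le> n} = Sigma {..n} (\<lambda>j. {..n-j})" by auto
    then show ?thesis by (simp add: sum.Sigma)
  qed
  also have "\<dots> = smul f (smul g h) w"
    unfolding smul_apply n_def F_def
    by (auto simp: sum_distrib_left mult.assoc add.commute intro!: sum.cong)
  finally show "smul (smul f g) h w = smul f (smul g h) w" .
qed

lemma word_apply: "word u v = (if v = u then 1 else 0)" by (simp add: word_def)

lemma smul_word_word: "smul (word u) (word v) = word (u @ v)"
proof (rule ext)
  fix w :: "letter list"
  have "smul (word u) (word v) w = (\<Sum>k\<le>length w. if k = length u \<and> w = u @ v then 1 else 0)"
    unfolding smul_apply word_apply
    by (rule sum.cong) (auto simp: append_eq_conv_conj)
  also have "\<dots> = word (u@v) w"
    by (auto simp: word_apply)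
  finally show "smul (word u) (word v) w = word (u @ v) w" .
qed

lemma one_apply: "one w = (if w = [] then 1 else 0)" by (simp add: one_def word_def)

lemma smul_one_left[simp]: "smul one f = f"
proof (rule ext)
  fix w :: "letter list"
  have "smul one f w = (\<Sum>k\<le>length w. if k = 0 then f w else 0)"
    unfolding smul_apply one_apply by (rule sum.cong) auto
  then show "smul one f w = f w" by simp
qed
lemma smul_one_right[simp]: "smul f one = f"
proof (rule ext)
  fix w :: "letter list"
  have "smul f one w = (\<Sum>k\<le>length w. if k = length w then f w else 0)"
    unfolding smul_apply one_apply by (rule sum.cong) auto
  then show "smul f one w = f w" by simp
qed


definition LT :: "(letter list \<Rightarrow> ser) \<Rightarrow> bool" where
  "LT K \<longleftrightarrow> (\<forall>u v. length v < length u \<longrightarrow> K u v = 0)"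

definition kop :: "(letter list \<Rightarrow> ser) \<Rightarrow> ser \<Rightarrow> ser" where
  "kop K f = (\<lambda>v. \<Sum>u\<in>{u. length u \<le> length v}. f u * K u v)"

lemma kop_apply: "kop K f v = (\<Sum>u\<in>{u. length u \<le> length v}. f u * K u v)"
  by (simp add: kop_def)

lemma sum_le_extend:
  assumes "LT K" "length w \<le> length v"
  shows "(\<Sum>u\<in>{u. length u \<le> length w}. f u * K u w) = (\<Sum>u\<in>{u. length u \<le> length v}. f u * K u w)"
  apply (rule sum.mono_neutral_left)
  using assms finite_le by (auto simp: LT_def)

lemma kop_word: "LT K \<Longrightarrow> kop K (word u) = K u"
proof (rule ext)
  fix v assume lt: "LT K"
  have "kop K (word u) v = (\<Sum>u'\<in>{u'. length u' \<le> length v}. if u' = u then K u v else 0)"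
    unfolding kop_apply by (rule sum.cong) (auto simp: word_apply)
  also have "\<dots> = K u v"
    using lt finite_le by (auto simp: LT_def sum.delta)
  finally show "kop K (word u) v = K u v" .
qed

lemma kop_add[simp]: "kop K (f + g) = kop K f + kop K g"
  by (rule ext) (simp add: kop_def distrib_right sum.distrib)
lemma kop_diff[simp]: "kop K (f - g) = kop K f - kop K g"
  by (rule ext) (simp add: kop_def left_diff_distrib sum_subtractf)
lemma kop_uminus[simp]: "kop K (- f) = - kop K f"
  by (rule ext) (simp add: kop_def sum_negf)
lemma kop_zero[simp]: "kop K 0 = 0"
  by (rule ext) (simp add: kop_def)
lemma kop_ssc[simp]: "kop K (ssc c f) = ssc c (kop K f)"
  by (rule ext) (simp add: kop_def sum_distrib_left mult.assoc)

lemma kop_Kadd: "kop (\<lambda>u. K1 u + K2 u) f = kop K1 f + kop K2 f"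
  by (rule ext) (simp add: kop_def distrib_left sum.distrib)
lemma kop_Kdiff: "kop (\<lambda>u. K1 u - K2 u) f = kop K1 f - kop K2 f"
  by (rule ext) (simp add: kop_def right_diff_distrib sum_subtractf)
lemma kop_Kssc: "kop (\<lambda>u. ssc c (K u)) f = ssc c (kop K f)"
  by (rule ext) (simp add: kop_def sum_distrib_left mult.left_commute)
lemma kop_Kuminus: "kop (\<lambda>u. - K u) f = - kop K f"
  by (rule ext) (simp add: kop_def sum_negf)
lemma kop_Kzero: "kop (\<lambda>u. 0) f = 0"
  by (rule ext) (simp add: kop_def)

lemma kop_comp:
  assumes "LT K1" "LT K2"
  shows "kop K1 (kop K2 f) = kop (\<lambda>u. kop K1 (K2 u)) f"
proof (rule ext)
  fix v :: "letter list"
  let ?S = "\<lambda>v::letter list. {u::letter list. length u \<le> length v}"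
  have "kop K1 (kop K2 f) v = (\<Sum>w\<in>?S v. (\<Sum>u\<in>?S w. f u * K2 u w) * K1 w v)"
    by (simp add: kop_apply)
  also have "\<dots> = (\<Sum>w\<in>?S v. (\<Sum>u\<in>?S v. f u * K2 u w) * K1 w v)"
    by (rule sum.cong[OF refl]) (simp add: sum_le_extend[OF assms(2)])
  also have "\<dots> = (\<Sum>w\<in>?S v. \<Sum>u\<in>?S v. f u * (K2 u w * K1 w v))"
    by (simp add: sum_distrib_right mult.assoc)
  also have "\<dots> = (\<Sum>u\<in>?S v. \<Sum>w\<in>?S v. f u * (K2 u w * K1 w v))"
    by (rule sum.swap)
  also have "\<dots> = kop (\<lambda>u. kop K1 (K2 u)) f v"
    by (simp add: kop_apply sum_distrib_left)
  finally show "kop K1 (kop K2 f) v = kop (\<lambda>u. kop K1 (K2 u)) f v" .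
qed

lemma LT_kop: "LT K1 \<Longrightarrow> LT K2 \<Longrightarrow> LT (\<lambda>u. kop K1 (K2 u))"
  unfolding LT_def kop_apply
  by (auto intro!: sum.neutral)

definition ordge :: "nat \<Rightarrow> ser \<Rightarrow> bool" where
  "ordge p f \<longleftrightarrow> (\<forall>w. length w < p \<longrightarrow> f w = 0)"

lemma ordge_smul: "ordge p f \<Longrightarrow> ordge q g \<Longrightarrow> ordge (p + q) (smul f g)"
  unfolding ordge_def smul_apply
proof (intro allI impI sum.neutral ballI)
  fix w :: "letter list" and k
  assume f: "\<forall>w. length w < p \<longrightarrow> f w = 0" and g: "\<forall>w. length w < q \<longrightarrow> g w = 0"
    and w: "length w < p + q" and k: "k \<in> {..length w}"
  show "f (take k w) * g (drop k w) = 0"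
  proof (cases "k < p")
    case True then show ?thesis using f k by simp
  next
    case False then show ?thesis using g w k by simp
  qed
qed

lemma ordge_word: "ordge (length u) (word u)"
  by (auto simp: ordge_def word_apply)

lemma ordge_mono: "ordge p f \<Longrightarrow> q \<le> p \<Longrightarrow> ordge q f"
  by (auto simp: ordge_def)

lemma ordge_0[simp]: "ordge 0 f" by (simp add: ordge_def)

lemma LT_iff_ordge: "LT K \<longleftrightarrow> (\<forall>u. ordge (length u) (K u))"
  by (auto simp: LT_def ordge_def)

lemma smul_as_kop_left: "smul f g = kop (\<lambda>u. smul (word u) g) f"
proof (rule ext)
  fix v :: "letter list"
  let ?S = "{u::letter list. length u \<le> length v}"
  have "kop (\<lambda>u. smul (word u) g) f v = (\<Sum>u\<in>?S. \<Sum>k\<le>length v. f u * ((if take k v = u then 1 else 0) * g (drop k v)))"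
    by (simp add: kop_apply smul_apply word_apply sum_distrib_left)
  also have "\<dots> = (\<Sum>k\<le>length v. \<Sum>u\<in>?S. f u * ((if take k v = u then 1 else 0) * g (drop k v)))"
    by (rule sum.swap)
  also have "\<dots> = (\<Sum>k\<le>length v. f (take k v) * g (drop k v))"
  proof (rule sum.cong[OF refl])
    fix k assume "k \<in> {..length v}"
    have "(\<Sum>u\<in>?S. f u * ((if take k v = u then 1 else 0) * g (drop k v)))
        = (\<Sum>u\<in>?S. if u = take k v then f (take k v) * g (drop k v) else 0)"
      by (rule sum.cong) auto
    also have "\<dots> = f (take k v) * g (drop k v)"
      using finite_le by (simp add: sum.delta')
    finally show "(\<Sum>u\<in>?S. f u * ((if take k v = u then 1 else 0) * g (drop k v))) = f (take k v) * g (drop k v)" .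
  qed
  finally show "smul f g v = kop (\<lambda>u. smul (word u) g) f v" by (simp add: smul_apply)
qed

lemma smul_as_kop_right: "smul f g = kop (\<lambda>u. smul f (word u)) g"
proof (rule ext)
  fix v :: "letter list"
  let ?S = "{u::letter list. length u \<le> length v}"
  have "kop (\<lambda>u. smul f (word u)) g v = (\<Sum>u\<in>?S. \<Sum>k\<le>length v. g u * (f (take k v) * (if drop k v = u then 1 else 0)))"
    by (simp add: kop_apply smul_apply word_apply sum_distrib_left)
  also have "\<dots> = (\<Sum>k\<le>length v. \<Sum>u\<in>?S. g u * (f (take k v) * (if drop k v = u then 1 else 0)))"
    by (rule sum.swap)
  also have "\<dots> = (\<Sum>k\<le>length v. f (take k v) * g (drop k v))"
  proof (rule sum.cong[OF refl])
    fix k assume "k \<in> {..length v}"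
    have "(\<Sum>u\<in>?S. g u * (f (take k v) * (if drop k v = u then 1 else 0)))
        = (\<Sum>u\<in>?S. if u = drop k v then f (take k v) * g (drop k v) else 0)"
      by (rule sum.cong) auto
    also have "\<dots> = f (take k v) * g (drop k v)"
      using finite_le by (simp add: sum.delta')
    finally show "(\<Sum>u\<in>?S. g u * (f (take k v) * (if drop k v = u then 1 else 0))) = f (take k v) * g (drop k v)" .
  qed
  finally show "smul f g v = kop (\<lambda>u. smul f (word u)) g v" by (simp add: smul_apply)
qed

lemma LT_smul_word_left: "LT (\<lambda>u. smul (word u) g)"
  unfolding LT_iff_ordge using ordge_smul[OF ordge_word ordge_0] by simp

lemma LT_smul_word_right: "LT (\<lambda>u. smul f (word u))"
  unfolding LT_iff_ordge using ordge_smul[OF ordge_0 ordge_word] by simp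


definition iskop :: "(ser \<Rightarrow> ser) \<Rightarrow> bool" where
  "iskop T \<longleftrightarrow> (\<exists>K. LT K \<and> T = kop K)"

lemma iskop_eq:
  assumes "iskop P" "iskop Q" "\<And>u. P (word u) = Q (word u)"
  shows "P f = Q f"
proof -
  obtain K1 where K1: "LT K1" "P = kop K1" using assms(1) by (auto simp: iskop_def)
  obtain K2 where K2: "LT K2" "Q = kop K2" using assms(2) by (auto simp: iskop_def)
  have "K1 = K2"
  proof
    fix u show "K1 u = K2 u" using assms(3)[of u] K1 K2 by (simp add: kop_word)
  qed
  then show ?thesis using K1 K2 by simp
qed

lemma iskop_kop: "LT K \<Longrightarrow> iskop (kop K)"
  by (auto simp: iskop_def)

lemma iskop_comp: "iskop T1 \<Longrightarrow> iskop T2 \<Longrightarrow> iskop (\<lambda>f. T1 (T2 f))"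
  unfolding iskop_def
proof (elim exE conjE)
  fix K1 K2 assume "LT K1" "T1 = kop K1" "LT K2" "T2 = kop K2"
  then show "\<exists>K. LT K \<and> (\<lambda>f. T1 (T2 f)) = kop K"
    by (intro exI[of _ "\<lambda>u. kop K1 (K2 u)"] conjI) (simp_all add: LT_kop kop_comp)
qed

lemma iskop_id: "iskop (\<lambda>f. f)"
proof -
  have "LT word" by (auto simp: LT_def word_apply)
  moreover have "(\<lambda>f. f) = kop word"
  proof (rule ext, rule ext)
    fix f :: ser and v :: "letter list"
    have "kop word f v = (\<Sum>u\<in>{u. length u \<le> length v}. if u = v then f v else 0)"
      unfolding kop_apply by (rule sum.cong) (auto simp: word_apply)
    also have "\<dots> = f v" using finite_le by (simp add: sum.delta')
    finally show "f v = kop word f v" by simp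
  qed
  ultimately show ?thesis by (auto simp: iskop_def)
qed

lemma LT_add: "LT K1 \<Longrightarrow> LT K2 \<Longrightarrow> LT (\<lambda>u. K1 u + K2 u)" by (simp add: LT_def)
lemma LT_diff: "LT K1 \<Longrightarrow> LT K2 \<Longrightarrow> LT (\<lambda>u. K1 u - K2 u)" by (simp add: LT_def)
lemma LT_ssc: "LT K1 \<Longrightarrow> LT (\<lambda>u. ssc c (K1 u))" by (simp add: LT_def)

lemma iskop_add: "iskop T1 \<Longrightarrow> iskop T2 \<Longrightarrow> iskop (\<lambda>f. T1 f + T2 f)"
  unfolding iskop_def
  by (elim exE conjE, rule_tac x="\<lambda>u. K u + Ka u" in exI) (simp add: LT_add kop_Kadd fun_eq_iff)
lemma iskop_diff: "iskop T1 \<Longrightarrow> iskop T2 \<Longrightarrow> iskop (\<lambda>f. T1 f - T2 f)"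
  unfolding iskop_def
  by (elim exE conjE, rule_tac x="\<lambda>u. K u - Ka u" in exI) (simp add: LT_diff kop_Kdiff fun_eq_iff)
lemma iskop_ssc: "iskop T1 \<Longrightarrow> iskop (\<lambda>f. ssc c (T1 f))"
  unfolding iskop_def
  by (elim exE conjE, rule_tac x="\<lambda>u. ssc c (K u)" in exI) (simp add: LT_ssc kop_Kssc fun_eq_iff)
lemma iskop_zero: "iskop (\<lambda>f. 0)"
  unfolding iskop_def
  by (rule exI[of _ "\<lambda>u. 0"]) (simp add: LT_def kop_Kzero fun_eq_iff)

lemma iskop_smul_left: "iskop (\<lambda>f. smul f g)"
  unfolding iskop_def using smul_as_kop_left LT_smul_word_left by blast
lemma iskop_smul_right: "iskop (\<lambda>g. smul f g)"
  unfolding iskop_def using smul_as_kop_right LT_smul_word_right by blast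

lemma iskop_linear:
  assumes "iskop T"
  shows "T (f + g) = T f + T g" "T (f - g) = T f - T g" "T (- f) = - T f" "T 0 = 0"
    "T (ssc c f) = ssc c (T f)"
  using assms by (auto simp: iskop_def)

lemma iskop_sum: "iskop T \<Longrightarrow> T (sum F A) = (\<Sum>x\<in>A. T (F x))"
proof (induction A rule: infinite_finite_induct)
  case (infinite A)
  then show ?case using iskop_linear(4)[OF infinite(2)] by simp
next
  case empty
  then show ?case using iskop_linear(4)[OF empty] by simp
next
  case (insert x B)
  then show ?case using iskop_linear(1)[OF insert(4), of "F x" "sum F B"]
    by (simp only: sum.insert[OF insert(1,2)] insert(3))
qed

declare plus_fun_apply[simp del] zero_fun_apply[simp del] minus_apply[simp del] uminus_apply[simp del]

section \<open>Derivations\<close>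

definition noc :: "(letter \<Rightarrow> ser) \<Rightarrow> bool" where
  "noc \<delta> \<longleftrightarrow> (\<forall>l. \<delta> l [] = 0)"

lemma word_Cons: "word (l # w) = smul (gen l) (word w)"
  by (simp add: gen_def smul_word_word)

lemma word_Nil: "word [] = one" by (simp add: one_def)

lemma der_word_Nil[simp]: "der_word \<delta> [] = 0"
  by (simp add: der_word_def)

lemma der_word_Cons:
  "der_word \<delta> (l # w) = smul (\<delta> l) (word w) + smul (gen l) (der_word \<delta> w)"
proof -
  have "der_word \<delta> (l # w) = smul (smul (word []) (\<delta> l)) (word w) +
     (\<Sum>i<length w. smul (smul (word (l # take i w)) (\<delta> (w ! i))) (word (drop (Suc i) w)))"
    unfolding der_word_def length_Cons sum.lessThan_Suc_shift by simp
  also have "\<dots> = smul (\<delta> l) (word w) + smul (gen l) (der_word \<delta> w)"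
    by (simp add: der_word_def word_Nil word_Cons smul_assoc smul_sum_right)
  finally show ?thesis .
qed

lemma der_word_append:
  "der_word \<delta> (u @ w) = smul (der_word \<delta> u) (word w) + smul (word u) (der_word \<delta> w)"
  by (induction u) (simp_all add: der_word_Cons word_Cons smul_assoc smul_word_word word_Nil)

lemma ordge_add: "ordge p f \<Longrightarrow> ordge p g \<Longrightarrow> ordge p (f + g)"
  by (simp add: ordge_def plus_fun_apply)
lemma ordge_diff: "ordge p f \<Longrightarrow> ordge p g \<Longrightarrow> ordge p (f - g)"
  by (simp add: ordge_def minus_apply)

lemma LT_der_word: "noc \<delta> \<Longrightarrow> LT (der_word \<delta>)"
  unfolding LT_iff_ordge
proof
  fix u assume n: "noc \<delta>"
  show "ordge (length u) (der_word \<delta> u)"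
  proof (induction u)
    case Nil then show ?case by simp
  next
    case (Cons l w)
    have a: "ordge 1 (\<delta> l)" using n by (simp add: noc_def ordge_def)
    have b: "ordge 1 (gen l)" by (simp add: gen_def ordge_def word_apply)
    show ?case unfolding der_word_Cons
      using ordge_add[OF ordge_smul[OF a ordge_word] ordge_smul[OF b Cons]] by simp
  qed
qed

lemma der_is_kop: "der \<delta> = kop (der_word \<delta>)"
  by (rule ext, rule ext) (simp add: der_def kop_def)

lemma iskop_der: "noc \<delta> \<Longrightarrow> iskop (der \<delta>)"
  by (simp add: der_is_kop iskop_kop LT_der_word)

lemma der_word_eq: "noc \<delta> \<Longrightarrow> der \<delta> (word u) = der_word \<delta> u"
  by (simp add: der_is_kop kop_word LT_der_word)

lemma der_gen: "noc \<delta> \<Longrightarrow> der \<delta> (gen l) = \<delta> l"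
  by (simp add: gen_def der_word_eq der_word_Cons word_Nil)

lemma der_one: "noc \<delta> \<Longrightarrow> der \<delta> one = 0"
  by (simp add: one_def der_word_eq)

lemma der_leibniz:
  assumes n: "noc \<delta>"
  shows "der \<delta> (smul f g) = smul (der \<delta> f) g + smul f (der \<delta> g)"
proof -
  have K: "iskop (der \<delta>)" using n by (rule iskop_der)
  have w: "der \<delta> (smul (word u) g) = smul (der \<delta> (word u)) g + smul (word u) (der \<delta> g)" for u
    by (rule iskop_eq[where P="\<lambda>g. der \<delta> (smul (word u) g)"
          and Q="\<lambda>g. smul (der \<delta> (word u)) g + smul (word u) (der \<delta> g)"])
       (auto intro!: iskop_comp[OF K] iskop_smul_right iskop_add iskop_comp[OF iskop_smul_right K]
          simp: smul_word_word der_word_eq[OF n] der_word_append)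
  show ?thesis
    by (rule iskop_eq[where P="\<lambda>f. der \<delta> (smul f g)"
          and Q="\<lambda>f. smul (der \<delta> f) g + smul f (der \<delta> g)"])
       (auto intro!: iskop_comp[OF K] iskop_smul_left iskop_add iskop_comp[OF iskop_smul_left K] w)
qed

lemma der_linear:
  assumes "noc \<delta>"
  shows "der \<delta> (f + g) = der \<delta> f + der \<delta> g" "der \<delta> (f - g) = der \<delta> f - der \<delta> g"
    "der \<delta> (- f) = - der \<delta> f" "der \<delta> 0 = 0" "der \<delta> (ssc c f) = ssc c (der \<delta> f)"
  using iskop_linear[OF iskop_der[OF assms]] by auto

lemma der_sbr: "noc \<delta> \<Longrightarrow> der \<delta> (sbr f g) = sbr (der \<delta> f) g + sbr f (der \<delta> g)"
  by (simp add: sbr_def der_linear der_leibniz)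

section \<open>Substitutions\<close>

lemma subst_word_Nil[simp]: "subst_word \<sigma> [] = one"
  by (simp add: subst_word_def)
lemma subst_word_Cons: "subst_word \<sigma> (l # w) = smul (\<sigma> l) (subst_word \<sigma> w)"
  by (simp add: subst_word_def)
lemma subst_word_append: "subst_word \<sigma> (u @ w) = smul (subst_word \<sigma> u) (subst_word \<sigma> w)"
  by (induction u) (simp_all add: subst_word_Cons smul_assoc)

lemma LT_subst_word: "noc \<sigma> \<Longrightarrow> LT (subst_word \<sigma>)"
  unfolding LT_iff_ordge
proof
  fix u assume n: "noc \<sigma>"
  show "ordge (length u) (subst_word \<sigma> u)"
  proof (induction u)
    case Nil then show ?case by simp
  next
    case (Cons l w)
    have a: "ordge 1 (\<sigma> l)" using n by (simp add: noc_def ordge_def)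
    show ?case unfolding subst_word_Cons using ordge_smul[OF a Cons] by simp
  qed
qed

lemma subst_is_kop: "subst \<sigma> = kop (subst_word \<sigma>)"
  by (rule ext, rule ext) (simp add: subst_def kop_def)

lemma iskop_subst: "noc \<sigma> \<Longrightarrow> iskop (subst \<sigma>)"
  by (simp add: subst_is_kop iskop_kop LT_subst_word)

lemma subst_word_eq: "noc \<sigma> \<Longrightarrow> subst \<sigma> (word u) = subst_word \<sigma> u"
  by (simp add: subst_is_kop kop_word LT_subst_word)

lemma subst_gen: "noc \<sigma> \<Longrightarrow> subst \<sigma> (gen l) = \<sigma> l"
  by (simp add: gen_def subst_word_eq subst_word_Cons)

lemma subst_hom:
  assumes n: "noc \<sigma>"
  shows "subst \<sigma> (smul f g) = smul (subst \<sigma> f) (subst \<sigma> g)"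
proof -
  have K: "iskop (subst \<sigma>)" using n by (rule iskop_subst)
  have w: "subst \<sigma> (smul (word u) g) = smul (subst \<sigma> (word u)) (subst \<sigma> g)" for u
    by (rule iskop_eq[where P="\<lambda>g. subst \<sigma> (smul (word u) g)"
          and Q="\<lambda>g. smul (subst \<sigma> (word u)) (subst \<sigma> g)"])
       (auto intro!: iskop_comp[OF K] iskop_smul_right iskop_comp[OF iskop_smul_right K]
          simp: smul_word_word subst_word_eq[OF n] subst_word_append)
  show ?thesis
    by (rule iskop_eq[where P="\<lambda>f. subst \<sigma> (smul f g)"
          and Q="\<lambda>f. smul (subst \<sigma> f) (subst \<sigma> g)"])
       (auto intro!: iskop_comp[OF K] iskop_smul_left iskop_comp[OF iskop_smul_left K] w)
qed

lemma subst_linear: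
  assumes "noc \<sigma>"
  shows "subst \<sigma> (f + g) = subst \<sigma> f + subst \<sigma> g" "subst \<sigma> (f - g) = subst \<sigma> f - subst \<sigma> g"
    "subst \<sigma> (- f) = - subst \<sigma> f" "subst \<sigma> 0 = 0" "subst \<sigma> (ssc c f) = ssc c (subst \<sigma> f)"
  using iskop_linear[OF iskop_subst[OF assms]] by auto

lemma subst_sbr: "noc \<sigma> \<Longrightarrow> subst \<sigma> (sbr f g) = sbr (subst \<sigma> f) (subst \<sigma> g)"
  by (simp add: sbr_def subst_linear subst_hom)


lemma gen_Nil: "gen l [] = 0" by (simp add: gen_def word_apply)

lemma smul_Nil: "smul f g [] = f [] * g []" by (simp add: smul_apply)

lemma sbr_gen_Nil: "sbr (gen l) a [] = 0"
  by (simp add: sbr_def minus_apply smul_Nil gen_Nil)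

lemma sbr_add_left[simp]: "sbr (f + g) h = sbr f h + sbr g h" by (simp add: sbr_def)
lemma sbr_add_right[simp]: "sbr h (f + g) = sbr h f + sbr h g" by (simp add: sbr_def)
lemma sbr_diff_left[simp]: "sbr (f - g) h = sbr f h - sbr g h" by (simp add: sbr_def)
lemma sbr_diff_right[simp]: "sbr h (f - g) = sbr h f - sbr h g" by (simp add: sbr_def)
lemma sbr_uminus_left[simp]: "sbr (- f) h = - sbr f h" by (simp add: sbr_def)
lemma sbr_uminus_right[simp]: "sbr h (- f) = - sbr h f" by (simp add: sbr_def)
lemma sbr_zero[simp]: "sbr 0 h = 0" "sbr h 0 = 0" by (simp_all add: sbr_def)
lemma sbr_ssc[simp]: "sbr (ssc c f) h = ssc c (sbr f h)" "sbr h (ssc c f) = ssc c (sbr h f)"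
  by (simp_all add: sbr_def)
lemma sbr_self[simp]: "sbr f f = 0" by (simp add: sbr_def)

lemma jacobi: "sbr f (sbr g h) + sbr g (sbr h f) + sbr h (sbr f g) = 0"
  by (simp add: sbr_def smul_assoc algebra_simps)

lemma jacobi': "sbr f (sbr g h) = sbr (sbr f g) h - sbr (sbr f h) g"
  by (simp add: sbr_def smul_assoc algebra_simps)

definition dE :: "ser \<Rightarrow> ser \<Rightarrow> letter \<Rightarrow> ser" where
  "dE a b = (\<lambda>l. case l of X \<Rightarrow> sbr (gen X) a | Y \<Rightarrow> sbr (gen Y) b)"
definition dd :: "ser \<Rightarrow> letter \<Rightarrow> ser" where
  "dd f = (\<lambda>l. case l of X \<Rightarrow> 0 | Y \<Rightarrow> sbr (gen Y) f)"
definition sig :: "letter \<Rightarrow> ser" where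
  "sig = (\<lambda>l. case l of X \<Rightarrow> - gen X - gen Y | Y \<Rightarrow> gen Y)"

lemma E_der: "E a b = der (dE a b)" by (simp add: E_def dE_def)
lemma d_der: "d f = der (dd f)" by (simp add: d_def dd_def)
lemma nu_subst: "nu = subst sig" by (simp add: nu_def sig_def)

lemma noc_dE: "noc (dE a b)"
  by (auto simp: noc_def dE_def sbr_gen_Nil split: letter.split)
lemma noc_dd: "noc (dd f)"
  by (auto simp: noc_def dd_def sbr_gen_Nil zero_fun_apply split: letter.split)
lemma noc_sig: "noc sig"
  by (auto simp: noc_def sig_def gen_Nil minus_apply uminus_apply split: letter.split)

lemma E_lin: "E a b (f + g) = E a b f + E a b g" "E a b (f - g) = E a b f - E a b g"
  "E a b (- f) = - E a b f" "E a b 0 = 0" "E a b (ssc c f) = ssc c (E a b f)"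
  by (simp_all add: E_der der_linear[OF noc_dE])
lemma d_lin: "d h (f + g) = d h f + d h g" "d h (f - g) = d h f - d h g"
  "d h (- f) = - d h f" "d h 0 = 0" "d h (ssc c f) = ssc c (d h f)"
  by (simp_all add: d_der der_linear[OF noc_dd])
lemma nu_lin: "nu (f + g) = nu f + nu g" "nu (f - g) = nu f - nu g"
  "nu (- f) = - nu f" "nu 0 = 0" "nu (ssc c f) = ssc c (nu f)"
  by (simp_all add: nu_subst subst_linear[OF noc_sig])

lemma E_sbr: "E a b (sbr f g) = sbr (E a b f) g + sbr f (E a b g)"
  by (simp add: E_der der_sbr[OF noc_dE])
lemma d_sbr: "d h (sbr f g) = sbr (d h f) g + sbr f (d h g)"
  by (simp add: d_der der_sbr[OF noc_dd])
lemma nu_sbr: "nu (sbr f g) = sbr (nu f) (nu g)"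
  by (simp add: nu_subst subst_sbr[OF noc_sig])

lemma E_gen: "E a b (gen X) = sbr (gen X) a" "E a b (gen Y) = sbr (gen Y) b"
  by (simp_all add: E_der der_gen[OF noc_dE], simp_all add: dE_def)
lemma d_gen: "d h (gen X) = 0" "d h (gen Y) = sbr (gen Y) h"
  by (simp_all add: d_der der_gen[OF noc_dd], simp_all add: dd_def)
lemma nu_gen: "nu (gen X) = - gen X - gen Y" "nu (gen Y) = gen Y"
  by (simp_all add: nu_subst subst_gen[OF noc_sig], simp_all add: sig_def)

lemma tang_closure:
  assumes t1: "sbr (gen X) a + sbr (gen Y) b = 0"
    and t2: "sbr (gen X) a' + sbr (gen Y) b' = 0"
  shows "sbr (gen X) (sbr a a' + E a b a' - E a' b' a) + sbr (gen Y) (sbr b b' + E a b b' - E a' b' b) = 0"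
proof -
  have h1: "E a b (sbr (gen X) a' + sbr (gen Y) b') = 0" using t2 by (simp add: E_lin)
  have h2: "E a' b' (sbr (gen X) a + sbr (gen Y) b) = 0" using t1 by (simp add: E_lin)
  let ?G = "sbr (gen X) (sbr a a' + E a b a' - E a' b' a) + sbr (gen Y) (sbr b b' + E a b b' - E a' b' b)"
  have "?G = ?G - E a b (sbr (gen X) a' + sbr (gen Y) b') + E a' b' (sbr (gen X) a + sbr (gen Y) b)"
    using h1 h2 by simp
  also have "\<dots> = 0"
    apply (simp only: E_lin E_sbr E_gen)
    apply (simp add: sbr_def smul_assoc algebra_simps)
    done
  finally show ?thesis .
qed

lemma nu_one: "nu one = one"
  by (simp add: nu_subst one_def subst_word_eq[OF noc_sig])
lemma E_one: "E a b one = 0" by (simp add: E_der der_one[OF noc_dE])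
lemma d_one: "d h one = 0" by (simp add: d_der der_one[OF noc_dd])

lemma E_leibniz: "E a b (smul f g) = smul (E a b f) g + smul f (E a b g)"
  by (simp add: E_der der_leibniz[OF noc_dE])
lemma d_leibniz: "d h (smul f g) = smul (d h f) g + smul f (d h g)"
  by (simp add: d_der der_leibniz[OF noc_dd])
lemma nu_hom: "nu (smul f g) = smul (nu f) (nu g)"
  by (simp add: nu_subst subst_hom[OF noc_sig])

lemma iskop_E: "iskop (E a b)" by (simp add: E_der iskop_der[OF noc_dE])
lemma iskop_d: "iskop (d h)" by (simp add: d_der iskop_der[OF noc_dd])
lemma iskop_nu: "iskop nu" by (simp add: nu_subst iskop_subst[OF noc_sig])

lemma nu_E:
  assumes t: "sbr (gen X) a + sbr (gen Y) b = 0"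
  shows "nu (E a b c) = d (nu b) (nu c)"
proof (rule iskop_eq[where P="\<lambda>c. nu (E a b c)" and Q="\<lambda>c. d (nu b) (nu c)"])
  show "iskop (\<lambda>c. nu (E a b c))" by (rule iskop_comp[OF iskop_nu iskop_E])
  show "iskop (\<lambda>c. d (nu b) (nu c))" by (rule iskop_comp[OF iskop_d iskop_nu])
  have tn: "sbr (- gen X - gen Y) (nu a) + sbr (gen Y) (nu b) = 0"
    using arg_cong[OF t, of nu] by (simp add: nu_lin nu_sbr nu_gen)
  have L: "nu (E a b (gen l)) = d (nu b) (nu (gen l))" for l
  proof (cases l)
    case X
    then show ?thesis using tn by (simp add: E_gen nu_sbr nu_gen d_lin d_gen eq_neg_iff_add_eq_0 add.commute)
  next
    case Y
    then show ?thesis by (simp add: E_gen nu_sbr nu_gen d_gen)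
  qed
  fix u show "nu (E a b (word u)) = d (nu b) (nu (word u))"
  proof (induction u)
    case Nil
    then show ?case by (simp add: word_Nil E_one nu_one d_one nu_lin)
  next
    case (Cons l w)
    then show ?case by (simp add: word_Cons E_leibniz nu_hom d_leibniz nu_lin L)
  qed
qed

lemma der_word_delta_add: "der_word (\<lambda>l. \<delta>1 l + \<delta>2 l) u = der_word \<delta>1 u + der_word \<delta>2 u"
  by (simp add: der_word_def sum.distrib)
lemma der_word_delta_ssc: "der_word (\<lambda>l. ssc c (\<delta>1 l)) u = ssc c (der_word \<delta>1 u)"
proof -
  have "ssc c (sum F A) = (\<Sum>x\<in>A. ssc c (F x))" for F and A :: "nat set"
    by (rule ext) (simp add: sum_fun_apply' sum_distrib_left)
  then show ?thesis by (simp add: der_word_def)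
qed

lemma der_delta_add: "der (\<lambda>l. \<delta>1 l + \<delta>2 l) f = der \<delta>1 f + der \<delta>2 f"
  by (rule ext) (simp add: der_def der_word_delta_add plus_fun_apply distrib_left sum.distrib)
lemma der_delta_ssc: "der (\<lambda>l. ssc c (\<delta>1 l)) f = ssc c (der \<delta>1 f)"
  by (rule ext) (simp add: der_def der_word_delta_ssc sum_distrib_left mult.left_commute)

lemma d_add: "d (f + g) h = d f h + d g h"
proof -
  have "dd (f + g) = (\<lambda>l. dd f l + dd g l)"
    by (rule ext) (simp add: dd_def split: letter.split)
  then show ?thesis by (simp add: d_der der_delta_add)
qed
lemma d_ssc: "d (ssc c f) h = ssc c (d f h)"
proof -
  have "dd (ssc c f) = (\<lambda>l. ssc c (dd f l))"
    by (rule ext) (simp add: dd_def split: letter.split)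
  then show ?thesis by (simp add: d_der der_delta_ssc)
qed

lemma dJ: "d (poisson g h) f = d g (d h f) - d h (d g f)"
proof (rule iskop_eq[where P="d (poisson g h)" and Q="\<lambda>f. d g (d h f) - d h (d g f)"])
  show "iskop (d (poisson g h))" by (rule iskop_d)
  show "iskop (\<lambda>f. d g (d h f) - d h (d g f))"
    by (intro iskop_diff iskop_comp[OF iskop_d iskop_d])
  have L: "d (poisson g h) (gen l) = d g (d h (gen l)) - d h (d g (gen l))" for l
  proof (cases l)
    case X
    then show ?thesis by (simp add: d_gen d_lin)
  next
    case Y
    then show ?thesis by (simp add: d_gen d_sbr poisson_def jacobi')
  qed
  fix u show "d (poisson g h) (word u) = d g (d h (word u)) - d h (d g (word u))"
  proof (induction u)
    case Nil
    then show ?case by (simp add: word_Nil d_one d_lin)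
  next
    case (Cons l w)
    show ?case
      by (simp add: word_Cons d_leibniz d_lin L Cons.IH algebra_simps)
  qed
qed

lemma poisson_jacobi: "poisson f (poisson g h) + poisson g (poisson h f) + poisson h (poisson f g) = 0"
proof -
  have e: "poisson f (poisson g h) = sbr f (sbr g h) + sbr f (d g h) - sbr f (d h g)
     + (sbr (d f g) h + sbr g (d f h) + d f (d g h) - d f (d h g))
     - (d g (d h f) - d h (d g f))" for f g h
    by (simp only: poisson_def[of f "poisson g h"] dJ) (simp add: poisson_def d_lin d_sbr)
  show ?thesis unfolding e by (simp add: sbr_def smul_assoc algebra_simps)
qed

lemma poisson_bilin:
  "poisson (f + g) h = poisson f h + poisson g h"
  "poisson h (f + g) = poisson h f + poisson h g"
  "poisson (ssc c f) g = ssc c (poisson f g)"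
  "poisson f (ssc c g) = ssc c (poisson f g)"
  "poisson f f = 0"
  by (simp_all add: poisson_def d_add d_lin d_ssc algebra_simps)


definition rot :: "letter list \<Rightarrow> letter list set" where
  "rot w = {rotate k w | k. True}"

lemma trace_rot: "trace f w = (\<Sum>v\<in>rot w. f v)"
  by (simp add: trace_def rot_def)

lemma rot_image: "rot w = (\<lambda>k. rotate k w) ` {..length w}"
proof
  show "rot w \<subseteq> (\<lambda>k. rotate k w) ` {..length w}"
  proof
    fix v assume "v \<in> rot w"
    then obtain k where v: "v = rotate k w" by (auto simp: rot_def)
    show "v \<in> (\<lambda>k. rotate k w) ` {..length w}"
    proof (cases "w = []")
      case True then show ?thesis using v by auto
    next
      case False
      then have "k mod length w \<le> length w" by (simp add: less_imp_le)
      moreover have "v = rotate (k mod length w) w" using v rotate_conv_mod by metis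
      ultimately show ?thesis by blast
    qed
  qed
qed (auto simp: rot_def)

lemma finite_rot: "finite (rot w)" by (simp add: rot_image)

lemma rot_length: "v \<in> rot w \<Longrightarrow> length v = length w"
  by (auto simp: rot_def)

lemma rot_self: "w \<in> rot w"
  unfolding rot_def by (metis (mono_tags, lifting) mem_Collect_eq rotate0 id_apply)

lemma rot_rotate: "rotate k w \<in> rot w" by (auto simp: rot_def)

lemma rot_sub: "v \<in> rot w \<Longrightarrow> rot v \<subseteq> rot w"
  by (auto simp: rot_def rotate_rotate)

lemma rot_sym: "v \<in> rot w \<Longrightarrow> w \<in> rot v"
proof -
  assume "v \<in> rot w"
  then obtain k where v: "v = rotate k w" by (auto simp: rot_def)
  show "w \<in> rot v"
  proof (cases "w = []")
    case True then show ?thesis using v rot_self by simp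
  next
    case False
    have "rotate (k * (length w - 1)) v = rotate (k * (length w - 1) + k) w" using v by (simp add: rotate_rotate)
    also have "k * (length w - 1) + k = k * length w" using False
      by (cases "length w") (auto simp: algebra_simps)
    also have "rotate (k * length w) w = w" by simp
    finally show ?thesis using rot_rotate by metis
  qed
qed

lemma rot_eq: "v \<in> rot w \<Longrightarrow> rot v = rot w"
  using rot_sub rot_sym by (metis subset_antisym)

lemma rot_append: "u @ v \<in> rot w \<longleftrightarrow> v @ u \<in> rot w"
proof -
  have a: "v @ u \<in> rot (u @ v)" for u v :: "letter list"
    using rot_rotate[of "length u" "u @ v"] by (simp add: rotate_append)
  show ?thesis using a[of u v] a[of v u] rot_eq by metis
qed

lemma trace_word: "trace (word u) w = (if u \<in> rot w then 1 else 0)"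
  unfolding trace_rot word_apply using finite_rot by (simp add: sum.delta')

lemma LT_trace_word: "LT (\<lambda>u. trace (word u))"
  by (auto simp: LT_def trace_word dest: rot_length)

lemma trace_is_kop: "trace = kop (\<lambda>u. trace (word u))"
proof (rule ext, rule ext)
  fix f w
  have "kop (\<lambda>u. trace (word u)) f w = (\<Sum>u\<in>{u. length u \<le> length w}. if u \<in> rot w then f u else 0)"
    unfolding kop_apply trace_word by (rule sum.cong) auto
  also have "\<dots> = (\<Sum>u\<in>rot w. f u)"
    using finite_le rot_length by (subst sum.If_cases) (auto intro!: sum.cong simp: Int_absorb1 subset_iff)
  finally show "trace f w = kop (\<lambda>u. trace (word u)) f w" by (simp add: trace_rot)
qed

lemma iskop_trace: "iskop trace"
  using trace_is_kop LT_trace_word iskop_kop by metis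

lemma trace_lin: "trace (f + g) = trace f + trace g" "trace (f - g) = trace f - trace g"
  "trace (- f) = - trace f" "trace 0 = 0" "trace (ssc c f) = ssc c (trace f)"
  using iskop_linear[OF iskop_trace] by auto

lemma trace_comm: "trace (smul f g) = trace (smul g f)"
proof (rule iskop_eq[where P="\<lambda>f. trace (smul f g)" and Q="\<lambda>f. trace (smul g f)"])
  show "iskop (\<lambda>f. trace (smul f g))" by (rule iskop_comp[OF iskop_trace iskop_smul_left])
  show "iskop (\<lambda>f. trace (smul g f))" by (rule iskop_comp[OF iskop_trace iskop_smul_right])
  fix u show "trace (smul (word u) g) = trace (smul g (word u))"
  proof (rule iskop_eq[where P="\<lambda>g. trace (smul (word u) g)" and Q="\<lambda>g. trace (smul g (word u))"])
    show "iskop (\<lambda>g. trace (smul (word u) g))" by (rule iskop_comp[OF iskop_trace iskop_smul_right])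
    show "iskop (\<lambda>g. trace (smul g (word u)))" by (rule iskop_comp[OF iskop_trace iskop_smul_left])
    fix v show "trace (smul (word u) (word v)) = trace (smul (word v) (word u))"
      by (rule ext) (simp add: smul_word_word trace_word rot_append)
  qed
qed

lemma trace_sbr: "trace (sbr f g) = 0"
  by (simp add: sbr_def trace_lin trace_comm)

lemma iskop_kernel: "iskop T \<Longrightarrow> T f = kop (\<lambda>u. T (word u)) f"
  by (auto simp: iskop_def kop_word)

lemma trace_der_rotate1:
  assumes n: "noc \<delta>"
  shows "trace (der \<delta> (word (rotate1 u))) = trace (der \<delta> (word u))"
proof (cases u)
  case Nil then show ?thesis by simp
next
  case (Cons l r)
  have "word (r @ [l]) = smul (word r) (gen l)" by (simp add: gen_def smul_word_word)
  then show ?thesis using Cons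
    by (simp add: word_Cons der_leibniz[OF n] der_gen[OF n] trace_lin trace_comm[of "\<delta> l"]
        trace_comm[of "gen l"] add.commute)
qed

lemma trace_der_rotate:
  assumes n: "noc \<delta>"
  shows "trace (der \<delta> (word (rotate k u))) = trace (der \<delta> (word u))"
  by (induction k) (simp_all add: trace_der_rotate1[OF n])

lemma trace_der_rot:
  assumes n: "noc \<delta>" and v: "v \<in> rot u"
  shows "trace (der \<delta> (word v)) = trace (der \<delta> (word u))"
  using v trace_der_rotate[OF n] by (auto simp: rot_def)

lemma trace_der_zero:
  assumes n: "noc \<delta>" and t: "trace f = 0"
  shows "trace (der \<delta> f) = 0"
proof (rule ext)
  fix w
  let ?T = "\<lambda>u. trace (der \<delta> (word u)) w"
  let ?S = "{u::letter list. length u \<le> length w}"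
  have "trace (der \<delta> f) w = (\<Sum>u\<in>?S. f u * ?T u)"
    using iskop_kernel[OF iskop_comp[OF iskop_trace iskop_der[OF n]], of f]
    by (simp add: kop_apply)
  also have "\<dots> = (\<Sum>C\<in>rot ` ?S. \<Sum>u\<in>C. f u * ?T u)"
  proof -
    have U: "\<Union>(rot ` ?S) = ?S"
      using rot_self rot_length by fastforce
    have "(\<Sum>u\<in>\<Union>(rot ` ?S). f u * ?T u) = (\<Sum>C\<in>rot ` ?S. \<Sum>u\<in>C. f u * ?T u)"
    proof (rule sum.Union_disjoint[unfolded comp_def])
      show "\<forall>A\<in>rot ` ?S. finite A" using finite_rot by blast
      show "\<forall>A\<in>rot ` ?S. \<forall>B\<in>rot ` ?S. A \<noteq> B \<longrightarrow> A \<inter> B = {}"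
        using rot_eq by blast
    qed
    then show ?thesis using U by simp
  qed
  also have "\<dots> = 0"
  proof (rule sum.neutral, rule ballI)
    fix C assume "C \<in> rot ` ?S"
    then obtain u where C: "C = rot u" by blast
    have "(\<Sum>v\<in>rot u. f v * ?T v) = (\<Sum>v\<in>rot u. f v * ?T u)"
      by (rule sum.cong) (simp_all add: trace_der_rot[OF n])
    also have "\<dots> = trace f u * ?T u" by (simp add: trace_rot sum_distrib_right)
    also have "\<dots> = 0" using t by (simp add: zero_fun_apply)
    finally show "(\<Sum>v\<in>C. f v * ?T v) = 0" using C by simp
  qed
  finally show "trace (der \<delta> f) w = 0 w" by (simp add: zero_fun_apply)
qed


lemma rcoef_apply: "rcoef f l w = f (w @ [l])" by (simp add: rcoef_def)

lemma rcoef_lin[simp]: "rcoef (f + g) l = rcoef f l + rcoef g l" "rcoef (f - g) l = rcoef f l - rcoef g l"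
  "rcoef (- f) l = - rcoef f l" "rcoef 0 l = 0" "rcoef (ssc c f) l = ssc c (rcoef f l)"
  by (auto simp: fun_eq_iff rcoef_apply plus_fun_apply minus_apply uminus_apply zero_fun_apply)

lemma rcoef_gen: "rcoef (gen m) l = (if m = l then one else 0)"
  by (auto simp: fun_eq_iff rcoef_apply gen_def word_apply one_apply zero_fun_apply)

lemma rcoef_one[simp]: "rcoef one l = 0"
  by (auto simp: fun_eq_iff rcoef_apply one_apply zero_fun_apply)

lemma rcoef_smul: "rcoef (smul f g) l = smul f (rcoef g l) + ssc (g []) (rcoef f l)"
proof (rule ext)
  fix w :: "letter list"
  have "rcoef (smul f g) l w = (\<Sum>k\<le>Suc (length w). f (take k (w @ [l])) * g (drop k (w @ [l])))"
    by (simp add: rcoef_apply smul_apply)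
  also have "\<dots> = (\<Sum>k\<le>length w. f (take k w) * g (drop k w @ [l])) + f (w @ [l]) * g []"
    by (simp add: sum.atMost_Suc)
  also have "\<dots> = (smul f (rcoef g l) + ssc (g []) (rcoef f l)) w"
    by (simp add: plus_fun_apply smul_apply rcoef_apply mult.commute)
  finally show "rcoef (smul f g) l w = (smul f (rcoef g l) + ssc (g []) (rcoef f l)) w" .
qed

lemma smul_gen_right_Nil: "smul f (gen l) [] = 0"
  by (simp add: smul_Nil gen_Nil)

lemma decomp: "f = ssc (f []) one + smul (rcoef f X) (gen X) + smul (rcoef f Y) (gen Y)"
proof (rule ext)
  fix w :: "letter list"
  show "f w = (ssc (f []) one + smul (rcoef f X) (gen X) + smul (rcoef f Y) (gen Y)) w"
  proof (cases w rule: rev_exhaust)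
    case Nil
    then show ?thesis by (simp add: plus_fun_apply one_apply smul_gen_right_Nil)
  next
    case (snoc w' m)
    have "smul g (gen l) (w' @ [m]) = (if l = m then g w' else 0)" for g l
      using fun_cong[OF rcoef_smul[of g "gen l" m], of w']
      by (simp add: rcoef_apply rcoef_gen gen_Nil plus_fun_apply zero_fun_apply)
    then show ?thesis using snoc
      by (cases m) (simp_all add: plus_fun_apply one_apply rcoef_apply)
  qed
qed

lemma rcoef_der:
  assumes n: "noc \<delta>"
  shows "rcoef (der \<delta> f) l = der \<delta> (rcoef f l) + smul (rcoef f X) (rcoef (\<delta> X) l) + smul (rcoef f Y) (rcoef (\<delta> Y) l)"
proof -
  have "der \<delta> f = der \<delta> (ssc (f []) one + smul (rcoef f X) (gen X) + smul (rcoef f Y) (gen Y))"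
    using decomp[of f] by (rule arg_cong)
  also have "\<dots> = smul (der \<delta> (rcoef f X)) (gen X) + smul (rcoef f X) (\<delta> X)
      + smul (der \<delta> (rcoef f Y)) (gen Y) + smul (rcoef f Y) (\<delta> Y)"
    by (simp add: der_linear[OF n] der_leibniz[OF n] der_one[OF n] der_gen[OF n])
  finally have e: "der \<delta> f = \<dots>" .
  have z: "\<delta> m [] = 0" for m using n by (simp add: noc_def)
  show ?thesis unfolding e
    by (cases l) (simp_all add: rcoef_smul rcoef_gen gen_Nil z)
qed

lemma rcoef_E: "rcoef (E a b f) l = E a b (rcoef f l) + smul (rcoef f X) (rcoef (sbr (gen X) a) l)
   + smul (rcoef f Y) (rcoef (sbr (gen Y) b) l)"
  unfolding E_der using rcoef_der[OF noc_dE] by (simp add: dE_def)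

lemma rcoef_sbr: "f [] = 0 \<Longrightarrow> g [] = 0 \<Longrightarrow> rcoef (sbr f g) l = smul f (rcoef g l) - smul g (rcoef f l)"
  by (simp add: sbr_def rcoef_smul)

lemma cocycle:
  assumes z: "a [] = 0" "b [] = 0" "a' [] = 0" "b' [] = 0"
  shows "trace (smul (rcoef (sbr a a' + E a b a' - E a' b' a) X) (gen X)
              + smul (rcoef (sbr b b' + E a b b' - E a' b' b) Y) (gen Y))
       = trace (E a b (smul (rcoef a' X) (gen X) + smul (rcoef b' Y) (gen Y)))
         - trace (E a' b' (smul (rcoef a X) (gen X) + smul (rcoef b Y) (gen Y)))"
  apply (simp add: rcoef_E rcoef_sbr z gen_Nil rcoef_gen rcoef_smul E_lin E_leibniz E_gen trace_lin)
  apply (simp add: sbr_def smul_assoc trace_lin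
      trace_comm[of a "smul (rcoef a' X) (gen X)", simplified smul_assoc]
      trace_comm[of b "smul (rcoef b' Y) (gen Y)", simplified smul_assoc]
      trace_comm[of a' "smul (rcoef a X) (gen X)", simplified smul_assoc]
      trace_comm[of b' "smul (rcoef b Y) (gen Y)", simplified smul_assoc]
      trace_comm[of "smul (rcoef a' X) (gen X)" "smul (rcoef a X) (gen X)", simplified smul_assoc]
      trace_comm[of "smul (rcoef b' Y) (gen Y)" "smul (rcoef b Y) (gen Y)", simplified smul_assoc]
      trace_comm[of "smul (rcoef a' Y) (gen Y)" "smul (rcoef b X) (gen X)", simplified smul_assoc]
      trace_comm[of "smul (rcoef b' X) (gen X)" "smul (rcoef a Y) (gen Y)", simplified smul_assoc])
  done

lemma spow_0: "spow g 0 = one" by (simp add: spow_def)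
lemma spow_Suc: "spow g (Suc n) = smul g (spow g n)" by (simp add: spow_def)

lemma ordge_one: "ordge 0 one" by simp

lemma ordge_spow: "ordge 1 g \<Longrightarrow> ordge n (spow g n)"
proof (induction n)
  case 0 then show ?case by simp
next
  case (Suc n)
  then show ?case using ordge_smul[OF Suc(2) Suc(1)[OF Suc(2)]] by (simp add: spow_Suc)
qed

lemma iskop_peval:
  assumes T: "iskop T" and g: "ordge 1 g"
  shows "T (peval h g) v = (\<Sum>n\<le>length v. h n * T (spow g n) v)"
proof -
  obtain K where K: "LT K" "T = kop K" using T by (auto simp: iskop_def)
  let ?S = "{u::letter list. length u \<le> length v}"
  have "T (peval h g) v = (\<Sum>u\<in>?S. (\<Sum>n\<le>length u. h n * spow g n u) * K u v)"
    by (simp add: K kop_apply peval_def)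
  also have "\<dots> = (\<Sum>u\<in>?S. (\<Sum>n\<le>length v. h n * spow g n u) * K u v)"
  proof (rule sum.cong[OF refl])
    fix u assume u: "u \<in> ?S"
    have "(\<Sum>n\<le>length u. h n * spow g n u) = (\<Sum>n\<le>length v. h n * spow g n u)"
    proof (rule sum.mono_neutral_left)
      show "\<forall>i\<in>{..length v} - {..length u}. h i * spow g i u = 0"
        using ordge_spow[OF g] by (auto simp: ordge_def)
    qed (use u in auto)
    then show "(\<Sum>n\<le>length u. h n * spow g n u) * K u v = (\<Sum>n\<le>length v. h n * spow g n u) * K u v"
      by simp
  qed
  also have "\<dots> = (\<Sum>u\<in>?S. \<Sum>n\<le>length v. h n * (spow g n u * K u v))"
    by (simp add: sum_distrib_right mult.assoc)
  also have "\<dots> = (\<Sum>n\<le>length v. \<Sum>u\<in>?S. h n * (spow g n u * K u v))"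
    by (rule sum.swap)
  also have "\<dots> = (\<Sum>n\<le>length v. h n * T (spow g n) v)"
    by (simp add: K kop_apply sum_distrib_left)
  finally show ?thesis .
qed

lemma trace_T_peval:
  assumes T: "iskop T" and g: "ordge 1 g" and z: "\<And>n. trace (T (spow g n)) = 0"
  shows "trace (T (peval h g)) = 0"
proof (rule ext)
  fix w
  have "trace (T (peval h g)) w = (\<Sum>v\<in>rot w. \<Sum>n\<le>length w. h n * T (spow g n) v)"
    unfolding trace_rot by (rule sum.cong[OF refl]) (simp add: iskop_peval[OF T g] rot_length)
  also have "\<dots> = (\<Sum>n\<le>length w. h n * trace (T (spow g n)) w)"
    by (subst sum.swap) (simp add: trace_rot sum_distrib_left)
  also have "\<dots> = 0" by (simp add: z zero_fun_apply)
  finally show "trace (T (peval h g)) w = 0 w" by (simp add: zero_fun_apply)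
qed

lemma ordge_gen: "ordge 1 (gen l)" by (simp add: ordge_def gen_Nil)
lemma ordge_XY: "ordge 1 (gen X + gen Y)" by (rule ordge_add[OF ordge_gen ordge_gen])

lemma E_spow_X: "E a b (spow (gen X) n) = sbr (spow (gen X) n) a"
proof (induction n)
  case 0 then show ?case by (simp add: spow_0 E_one sbr_def)
next
  case (Suc n)
  show ?case by (simp add: spow_Suc E_leibniz E_gen Suc.IH sbr_def smul_assoc algebra_simps)
qed
lemma E_spow_Y: "E a b (spow (gen Y) n) = sbr (spow (gen Y) n) b"
proof (induction n)
  case 0 then show ?case by (simp add: spow_0 E_one sbr_def)
next
  case (Suc n)
  show ?case by (simp add: spow_Suc E_leibniz E_gen Suc.IH sbr_def smul_assoc algebra_simps)
qed
lemma E_spow_XY: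
  assumes t: "sbr (gen X) a + sbr (gen Y) b = 0"
  shows "E a b (spow (gen X + gen Y) n) = 0"
proof (induction n)
  case 0 then show ?case by (simp add: spow_0 E_one)
next
  case (Suc n)
  have "E a b (spow (gen X + gen Y) (Suc n)) = smul (sbr (gen X) a + sbr (gen Y) b) (spow (gen X + gen Y) n)"
    by (simp only: spow_Suc E_leibniz E_lin E_gen Suc.IH smul_add_left smul_zero_right add_0_right)
  then show ?case by (simp add: t)
qed

lemma trace_E_P:
  assumes t: "sbr (gen X) a + sbr (gen Y) b = 0"
  shows "trace (E a b (peval h (gen X + gen Y) - peval h (gen X) - peval h (gen Y))) = 0"
proof -
  have 1: "trace (E a b (peval h (gen X + gen Y))) = 0"
    by (rule trace_T_peval[OF iskop_E ordge_XY]) (simp add: E_spow_XY[OF t] trace_lin)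
  have 2: "trace (E a b (peval h (gen X))) = 0"
    by (rule trace_T_peval[OF iskop_E ordge_gen]) (simp add: E_spow_X trace_sbr)
  have 3: "trace (E a b (peval h (gen Y))) = 0"
    by (rule trace_T_peval[OF iskop_E ordge_gen]) (simp add: E_spow_Y trace_sbr)
  show ?thesis by (simp add: E_lin trace_lin 1 2 3)
qed

lemma trace_E_congr:
  assumes "trace f = trace g"
  shows "trace (E a b f) = trace (E a b g)"
proof -
  have "trace (f - g) = 0" using assms by (simp add: trace_lin)
  then have "trace (E a b (f - g)) = 0" unfolding E_der by (rule trace_der_zero[OF noc_dE])
  then show ?thesis by (simp add: E_lin trace_lin)
qed

lemma div_zero:
  assumes z: "a [] = 0" "b [] = 0" "a' [] = 0" "b' [] = 0"
    and t1: "sbr (gen X) a + sbr (gen Y) b = 0" and t2: "sbr (gen X) a' + sbr (gen Y) b' = 0"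
    and h1: "divE a b = trace (peval h (gen X + gen Y) - peval h (gen X) - peval h (gen Y))"
    and h2: "divE a' b' = trace (peval h' (gen X + gen Y) - peval h' (gen X) - peval h' (gen Y))"
  shows "divE (sbr a a' + E a b a' - E a' b' a) (sbr b b' + E a b b' - E a' b' b) = 0"
proof -
  have "divE (sbr a a' + E a b a' - E a' b' a) (sbr b b' + E a b b' - E a' b' b)
     = trace (E a b (smul (rcoef a' X) (gen X) + smul (rcoef b' Y) (gen Y)))
         - trace (E a' b' (smul (rcoef a X) (gen X) + smul (rcoef b Y) (gen Y)))"
    unfolding divE_def by (rule cocycle[of a b a' b', OF z])
  also have "\<dots> = trace (E a b (peval h' (gen X + gen Y) - peval h' (gen X) - peval h' (gen Y)))
       - trace (E a' b' (peval h (gen X + gen Y) - peval h (gen X) - peval h (gen Y)))"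
  proof -
    have q1: "trace (smul (rcoef a X) (gen X) + smul (rcoef b Y) (gen Y))
        = trace (peval h (gen X + gen Y) - peval h (gen X) - peval h (gen Y))"
      using h1 by (simp only: divE_def)
    have q2: "trace (smul (rcoef a' X) (gen X) + smul (rcoef b' Y) (gen Y))
        = trace (peval h' (gen X + gen Y) - peval h' (gen X) - peval h' (gen Y))"
      using h2 by (simp only: divE_def)
    show ?thesis using trace_E_congr[OF q1, of a' b'] trace_E_congr[OF q2, of a b] by simp
  qed
  also have "\<dots> = 0" by (simp add: trace_E_P[OF t1] trace_E_P[OF t2])
  finally show ?thesis .
qed


lemma lie_poly_zero: "0 \<in> lie_poly"
  using lie_poly.sc_in[OF lie_poly.gen_in, of 0 X] by simp
lemma lie_poly_uminus: "f \<in> lie_poly \<Longrightarrow> - f \<in> lie_poly"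
proof -
  assume "f \<in> lie_poly"
  then have "ssc (-1) f \<in> lie_poly" by (rule lie_poly.sc_in)
  moreover have "ssc (-1) f = - f" by (rule ext) (simp add: uminus_apply)
  ultimately show ?thesis by simp
qed
lemma lie_poly_diff: "f \<in> lie_poly \<Longrightarrow> g \<in> lie_poly \<Longrightarrow> f - g \<in> lie_poly"
  using lie_poly.add_in[OF _ lie_poly_uminus] by (metis diff_conv_add_uminus)
lemma lie_poly_sum: "(\<And>x. x \<in> A \<Longrightarrow> F x \<in> lie_poly) \<Longrightarrow> sum F A \<in> lie_poly"
  by (induction A rule: infinite_finite_induct) (auto intro: lie_poly_zero lie_poly.add_in)

lemma homog_apply: "homog n f w = (if length w = n then f w else 0)" by (simp add: homog_def)

lemma homog_lin[simp]: "homog n (f + g) = homog n f + homog n g" "homog n (f - g) = homog n f - homog n g"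
  "homog n (ssc c f) = ssc c (homog n f)" "homog n 0 = 0" "homog n (- f) = - homog n f"
  by (auto simp: fun_eq_iff homog_apply plus_fun_apply minus_apply zero_fun_apply uminus_apply)

lemma homog_smul: "homog n (smul f g) = (\<Sum>i\<le>n. smul (homog i f) (homog (n - i) g))"
proof (rule ext)
  fix w :: "letter list"
  have "(\<Sum>i\<le>n. smul (homog i f) (homog (n - i) g)) w
      = (\<Sum>i\<le>n. \<Sum>k\<le>length w. if k = i \<and> length w = n then f (take k w) * g (drop k w) else 0)"
    unfolding sum_fun_apply' smul_apply homog_apply
    by (intro sum.cong refl) auto
  also have "\<dots> = (\<Sum>k\<le>length w. \<Sum>i\<le>n. if k = i \<and> length w = n then f (take k w) * g (drop k w) else 0)"
    by (rule sum.swap)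
  also have "\<dots> = homog n (smul f g) w"
  proof (cases "length w = n")
    case True
    then show ?thesis by (simp add: homog_apply smul_apply)
  next
    case False
    then show ?thesis by (simp add: homog_apply)
  qed
  finally show "homog n (smul f g) w = (\<Sum>i\<le>n. smul (homog i f) (homog (n - i) g)) w" by simp
qed

lemma homog_sbr: "homog n (sbr f g) = (\<Sum>i\<le>n. sbr (homog i f) (homog (n - i) g))"
proof -
  have "(\<Sum>i\<le>n. smul (homog i g) (homog (n-i) f)) = (\<Sum>i\<le>n. smul (homog (n-i) g) (homog (n-(n-i)) f))"
    by (rule sum.reindex_bij_witness[of _ "\<lambda>i. n-i" "\<lambda>i. n-i"]) auto
  also have "\<dots> = (\<Sum>i\<le>n. smul (homog (n-i) g) (homog i f))"
    by (rule sum.cong) auto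
  finally show ?thesis by (simp add: sbr_def homog_smul sum_subtractf)
qed

lemma lie2_iff: "f \<in> lie2 \<longleftrightarrow> (\<forall>n. homog n f \<in> lie_poly)" by (simp add: lie2_def)

lemma lie2_add: "f \<in> lie2 \<Longrightarrow> g \<in> lie2 \<Longrightarrow> f + g \<in> lie2"
  by (simp add: lie2_iff lie_poly.add_in)
lemma lie2_diff: "f \<in> lie2 \<Longrightarrow> g \<in> lie2 \<Longrightarrow> f - g \<in> lie2"
  by (simp add: lie2_iff lie_poly_diff)
lemma lie2_ssc: "f \<in> lie2 \<Longrightarrow> ssc c f \<in> lie2"
  by (simp add: lie2_iff lie_poly.sc_in)
lemma lie2_zero: "0 \<in> lie2"
  by (simp add: lie2_iff lie_poly_zero)
lemma lie2_sbr: "f \<in> lie2 \<Longrightarrow> g \<in> lie2 \<Longrightarrow> sbr f g \<in> lie2"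
  by (simp add: lie2_iff homog_sbr lie_poly_sum lie_poly.br_in)

lemma homog_gen: "homog n (gen l) = (if n = 1 then gen l else 0)"
  by (auto simp: fun_eq_iff homog_apply gen_def word_apply zero_fun_apply)

lemma gen_lie2: "gen l \<in> lie2"
  by (simp add: lie2_iff homog_gen lie_poly.gen_in lie_poly_zero)

lemma lie_poly_lie2: "f \<in> lie_poly \<Longrightarrow> f \<in> lie2"
proof (induction rule: lie_poly.induct)
  case (gen_in l) then show ?case by (rule gen_lie2)
next
  case (add_in f g) show ?case by (rule lie2_add[OF add_in.IH])
next
  case (sc_in f c) show ?case by (rule lie2_ssc[OF sc_in.IH])
next
  case (br_in f g) show ?case by (rule lie2_sbr[OF br_in.IH])
qed



lemma der_lie_poly:
  assumes n: "noc \<delta>" and dl: "\<And>l. \<delta> l \<in> lie2"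
  shows "P \<in> lie_poly \<Longrightarrow> der \<delta> P \<in> lie2"
proof (induction rule: lie_poly.induct)
  case (gen_in l) show ?case by (subst der_gen[OF n]) (rule dl)
next
  case (add_in f g) show ?case by (subst der_linear(1)[OF n]) (rule lie2_add[OF add_in.IH])
next
  case (sc_in f c) show ?case by (subst der_linear(5)[OF n]) (rule lie2_ssc[OF sc_in.IH])
next
  case (br_in f g) show ?case
    by (subst der_sbr[OF n], rule lie2_add[OF lie2_sbr[OF br_in.IH(1) lie_poly_lie2[OF br_in.hyps(2)]]
        lie2_sbr[OF lie_poly_lie2[OF br_in.hyps(1)] br_in.IH(2)]])
qed

lemma homog_der_trunc:
  assumes n: "noc \<delta>"
  shows "homog n (der \<delta> c) = homog n (der \<delta> (\<Sum>m\<le>n. homog m c))"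
proof (rule ext)
  fix v :: "letter list"
  show "homog n (der \<delta> c) v = homog n (der \<delta> (\<Sum>m\<le>n. homog m c)) v"
  proof (cases "length v = n")
    case True
    have "der \<delta> c v = der \<delta> (\<Sum>m\<le>n. homog m c) v"
      unfolding der_def
    proof (rule sum.cong[OF refl])
      fix u :: "letter list" assume "u \<in> {u. length u \<le> length v}"
      then have "(\<Sum>m\<le>n. homog m c) u = c u"
        using True by (simp add: sum_fun_apply' homog_apply)
      then show "c u * der_word \<delta> u v = (\<Sum>m\<le>n. homog m c) u * der_word \<delta> u v" by simp
    qed
    then show ?thesis by (simp add: homog_apply)
  next
    case False then show ?thesis by (simp add: homog_apply)
  qed
qed

lemma homog_sum: "homog n (sum F A) = (\<Sum>x\<in>A. homog n (F x))"
  by (rule ext) (simp add: homog_apply sum_fun_apply')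

lemma der_lie2:
  assumes n: "noc \<delta>" and dl: "\<And>l. \<delta> l \<in> lie2" and c: "c \<in> lie2"
  shows "der \<delta> c \<in> lie2"
  unfolding lie2_iff
proof
  fix n
  have "homog n (der \<delta> c) = homog n (der \<delta> (\<Sum>m\<le>n. homog m c))"
    by (rule homog_der_trunc[OF n])
  also have "\<dots> = (\<Sum>m\<le>n. homog n (der \<delta> (homog m c)))"
    by (simp only: iskop_sum[OF iskop_der[OF n]] homog_sum)
  also have "\<dots> \<in> lie_poly"
  proof (rule lie_poly_sum)
    fix m
    have "homog m c \<in> lie_poly" using c by (simp add: lie2_iff)
    then have "der \<delta> (homog m c) \<in> lie2" by (rule der_lie_poly[OF n dl])
    then show "homog n (der \<delta> (homog m c)) \<in> lie_poly" by (simp add: lie2_iff)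
  qed
  finally show "homog n (der \<delta> c) \<in> lie_poly" .
qed

lemma E_lie2: "a \<in> lie2 \<Longrightarrow> b \<in> lie2 \<Longrightarrow> c \<in> lie2 \<Longrightarrow> E a b c \<in> lie2"
  unfolding E_der
proof (rule der_lie2[OF noc_dE])
  fix l assume "a \<in> lie2" "b \<in> lie2"
  then show "dE a b l \<in> lie2" by (cases l) (simp_all add: dE_def lie2_sbr[OF gen_lie2])
qed


lemma ordge_iskop: "iskop T \<Longrightarrow> ordge p f \<Longrightarrow> ordge p (T f)"
  by (auto simp: iskop_def ordge_def kop_apply intro!: sum.neutral)

lemma weight_ordge: "(\<forall>w. length w < 3 \<longrightarrow> a w = 0) \<longleftrightarrow> ordge 3 a"
  by (simp add: ordge_def)

lemma peval_add: "peval (\<lambda>n. h n + h' n) g = peval h g + peval h' g"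
  by (rule ext) (simp add: peval_def plus_fun_apply distrib_right sum.distrib)
lemma peval_ssc: "peval (\<lambda>n. c * h n) g = ssc c (peval h g)"
  by (rule ext) (simp add: peval_def sum_distrib_left mult.assoc)
lemma peval_zero: "peval (\<lambda>n. 0) g = 0"
  by (rule ext) (simp add: peval_def zero_fun_apply)

lemma divE_add: "divE (a + a') (b + b') = divE a b + divE a' b'"
  by (simp add: divE_def trace_lin algebra_simps)
lemma divE_ssc: "divE (ssc c a) (ssc c b) = ssc c (divE a b)"
proof -
  have "smul (ssc c (rcoef a X)) (gen X) + smul (ssc c (rcoef b Y)) (gen Y)
      = ssc c (smul (rcoef a X) (gen X) + smul (rcoef b Y) (gen Y))" by simp
  then show ?thesis by (simp add: divE_def trace_lin)
qed
lemma divE_zero: "divE 0 0 = 0"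
  by (simp add: divE_def trace_lin)

definition Pt :: "(nat \<Rightarrow> rat) \<Rightarrow> ser" where
  "Pt h = trace (peval h (gen X + gen Y) - peval h (gen X) - peval h (gen Y))"

lemma Pt_add: "Pt (\<lambda>n. h n + h' n) = Pt h + Pt h'"
  by (simp add: Pt_def peval_add trace_lin algebra_simps)
lemma Pt_ssc: "Pt (\<lambda>n. c * h n) = ssc c (Pt h)"
  by (simp add: Pt_def peval_ssc trace_lin)
lemma Pt_zero: "Pt (\<lambda>n. 0) = 0"
  by (simp add: Pt_def peval_zero trace_lin)

lemma krv_pair_iff: "krv_pair a b \<longleftrightarrow>
     a \<in> lie2 \<and> b \<in> lie2 \<and> a [X] = 0 \<and> b [Y] = 0 \<and>
     sbr (gen X) a + sbr (gen Y) b = 0 \<and>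
     (\<exists>h::nat \<Rightarrow> rat. h 0 = 0 \<and> h 1 = 0 \<and> divE a b = Pt h) \<and>
     ordge 3 a \<and> ordge 3 b"
  unfolding krv_pair_def Pt_def ordge_def by blast

lemma krv_zero: "krv_pair 0 0"
  unfolding krv_pair_iff
  by (auto simp: lie2_zero zero_fun_apply divE_zero Pt_zero intro!: exI[of _ "\<lambda>n. 0"] simp: ordge_def)

lemma krv_add:
  assumes k1: "krv_pair a b" and k2: "krv_pair a' b'"
  shows "krv_pair (a + a') (b + b')"
proof -
  from k1 obtain h where h: "h 0 = 0" "h 1 = 0" "divE a b = Pt h"
    by (auto simp: krv_pair_iff)
  from k2 obtain h' where h': "h' 0 = 0" "h' 1 = 0" "divE a' b' = Pt h'"
    by (auto simp: krv_pair_iff)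
  have L: "a \<in> lie2" "b \<in> lie2" "a' \<in> lie2" "b' \<in> lie2" using k1 k2 by (auto simp: krv_pair_iff)
  have t1: "sbr (gen X) a + sbr (gen Y) b = 0" and t2: "sbr (gen X) a' + sbr (gen Y) b' = 0"
    using k1 k2 by (auto simp: krv_pair_iff)
  have o: "ordge 3 a" "ordge 3 b" "ordge 3 a'" "ordge 3 b'" using k1 k2 by (auto simp: krv_pair_iff)
  have x: "a [X] = 0" "b [Y] = 0" "a' [X] = 0" "b' [Y] = 0" using k1 k2 by (auto simp: krv_pair_iff)
  show ?thesis unfolding krv_pair_iff
  proof (intro conjI)
    show "a + a' \<in> lie2" by (rule lie2_add[OF L(1) L(3)])
    show "b + b' \<in> lie2" by (rule lie2_add[OF L(2) L(4)])
    show "(a + a') [X] = 0" using x by (simp add: plus_fun_apply)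
    show "(b + b') [Y] = 0" using x by (simp add: plus_fun_apply)
    have "sbr (gen X) (a + a') + sbr (gen Y) (b + b') = (sbr (gen X) a + sbr (gen Y) b) + (sbr (gen X) a' + sbr (gen Y) b')"
      by (simp add: algebra_simps)
    then show "sbr (gen X) (a + a') + sbr (gen Y) (b + b') = 0" using t1 t2 by simp
    show "\<exists>h. h 0 = 0 \<and> h 1 = 0 \<and> divE (a + a') (b + b') = Pt h"
      by (rule exI[of _ "\<lambda>n. h n + h' n"]) (simp add: h(1,3) h'(1,3) h(2)[unfolded One_nat_def] h'(2)[unfolded One_nat_def] divE_add Pt_add)
    show "ordge 3 (a + a')" by (rule ordge_add[OF o(1) o(3)])
    show "ordge 3 (b + b')" by (rule ordge_add[OF o(2) o(4)])
  qed
qed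

lemma krv_ssc:
  assumes k1: "krv_pair a b"
  shows "krv_pair (ssc c a) (ssc c b)"
proof -
  from k1 obtain h where h: "h 0 = 0" "h 1 = 0" "divE a b = Pt h"
    by (auto simp: krv_pair_iff)
  have L: "a \<in> lie2" "b \<in> lie2" using k1 by (auto simp: krv_pair_iff)
  have t1: "sbr (gen X) a + sbr (gen Y) b = 0" using k1 by (auto simp: krv_pair_iff)
  have o: "ordge 3 a" "ordge 3 b" using k1 by (auto simp: krv_pair_iff)
  have x: "a [X] = 0" "b [Y] = 0" using k1 by (auto simp: krv_pair_iff)
  show ?thesis unfolding krv_pair_iff
  proof (intro conjI)
    show "ssc c a \<in> lie2" by (rule lie2_ssc[OF L(1)])
    show "ssc c b \<in> lie2" by (rule lie2_ssc[OF L(2)])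
    show "ssc c a [X] = 0" using x by simp
    show "ssc c b [Y] = 0" using x by simp
    have "sbr (gen X) (ssc c a) + sbr (gen Y) (ssc c b) = ssc c (sbr (gen X) a + sbr (gen Y) b)"
      by simp
    then show "sbr (gen X) (ssc c a) + sbr (gen Y) (ssc c b) = 0" using t1 by simp
    show "\<exists>h. h 0 = 0 \<and> h 1 = 0 \<and> divE (ssc c a) (ssc c b) = Pt h"
      by (rule exI[of _ "\<lambda>n. c * h n"]) (simp add: h(1,3) h(2)[unfolded One_nat_def] divE_ssc Pt_ssc)
    show "ordge 3 (ssc c a)" using o by (simp add: ordge_def)
    show "ordge 3 (ssc c b)" using o by (simp add: ordge_def)
  qed
qed

lemma krv_bracket:
  assumes k1: "krv_pair a b" and k2: "krv_pair a' b'"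
  shows "krv_pair (sbr a a' + E a b a' - E a' b' a) (sbr b b' + E a b b' - E a' b' b)"
proof -
  have L: "a \<in> lie2" "b \<in> lie2" "a' \<in> lie2" "b' \<in> lie2" using k1 k2 by (auto simp: krv_pair_iff)
  have t1: "sbr (gen X) a + sbr (gen Y) b = 0" and t2: "sbr (gen X) a' + sbr (gen Y) b' = 0"
    using k1 k2 by (auto simp: krv_pair_iff)
  have o: "ordge 3 a" "ordge 3 b" "ordge 3 a'" "ordge 3 b'" using k1 k2 by (auto simp: krv_pair_iff)
  have z: "a [] = 0" "b [] = 0" "a' [] = 0" "b' [] = 0" using o by (auto simp: ordge_def)
  from k1 k2 obtain h h' where h: "divE a b = Pt h" and h': "divE a' b' = Pt h'"
    by (auto simp: krv_pair_iff)
  have o3: "ordge 3 (sbr f g + E a b g - E a' b' f)" if "ordge 3 f" "ordge 3 g" for f g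
  proof -
    have "ordge 3 (sbr f g)"
      unfolding sbr_def using ordge_smul[OF that(1) that(2)] ordge_smul[OF that(2) that(1)]
      by (intro ordge_diff; auto intro: ordge_mono)
    then show ?thesis
      by (intro ordge_diff ordge_add ordge_iskop[OF iskop_E] that)
  qed
  have oA: "ordge 3 (sbr a a' + E a b a' - E a' b' a)" by (rule o3[OF o(1) o(3)])
  have oB: "ordge 3 (sbr b b' + E a b b' - E a' b' b)" by (rule o3[OF o(2) o(4)])
  have d0: "divE (sbr a a' + E a b a' - E a' b' a) (sbr b b' + E a b b' - E a' b' b) = 0"
    by (rule div_zero[OF z t1 t2 h[unfolded Pt_def] h'[unfolded Pt_def]])
  show ?thesis unfolding krv_pair_iff
  proof (intro conjI)
    show "sbr a a' + E a b a' - E a' b' a \<in> lie2"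
      by (intro lie2_diff lie2_add lie2_sbr E_lie2 L)
    show "sbr b b' + E a b b' - E a' b' b \<in> lie2"
      by (intro lie2_diff lie2_add lie2_sbr E_lie2 L)
    show "(sbr a a' + E a b a' - E a' b' a) [X] = 0" using oA by (simp add: ordge_def)
    show "(sbr b b' + E a b b' - E a' b' b) [Y] = 0" using oB by (simp add: ordge_def)
    show "sbr (gen X) (sbr a a' + E a b a' - E a' b' a) + sbr (gen Y) (sbr b b' + E a b b' - E a' b' b) = 0"
      by (rule tang_closure[OF t1 t2])
    show "\<exists>h. h 0 = 0 \<and> h 1 = 0 \<and> divE (sbr a a' + E a b a' - E a' b' a) (sbr b b' + E a b b' - E a' b' b) = Pt h"
      by (rule exI[of _ "\<lambda>n. 0"]) (simp add: d0 Pt_zero)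
  qed (rule oA, rule oB)
qed

lemma W_iff: "f \<in> W_krv \<longleftrightarrow> (\<exists>a b. krv_pair a b \<and> f = nu b)"
  by (auto simp: W_krv_def V_krv_def)

theorem proposition24:
  shows "(\<forall>f\<in>W_krv. \<forall>g\<in>W_krv. poisson f g \<in> W_krv) \<and> lie_algebra_on W_krv poisson"
proof -
  have clos: "poisson f g \<in> W_krv" if f: "f \<in> W_krv" and g: "g \<in> W_krv" for f g
  proof -
    obtain a b where ab: "krv_pair a b" "f = nu b" using f by (auto simp: W_iff)
    obtain a' b' where ab': "krv_pair a' b'" "g = nu b'" using g by (auto simp: W_iff)
    have t1: "sbr (gen X) a + sbr (gen Y) b = 0" and t2: "sbr (gen X) a' + sbr (gen Y) b' = 0"
      using ab ab' by (auto simp: krv_pair_iff)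
    have e: "nu (sbr b b' + E a b b' - E a' b' b) = poisson f g"
      by (simp add: nu_lin nu_sbr nu_E[OF t1] nu_E[OF t2] ab ab' poisson_def)
    show ?thesis unfolding W_iff
      using krv_bracket[OF ab(1) ab'(1)] e[symmetric] by blast
  qed
  have z: "0 \<in> W_krv" unfolding W_iff
    by (rule exI[of _ 0], rule exI[of _ 0]) (simp add: krv_zero nu_lin)
  have add: "f + g \<in> W_krv" if f: "f \<in> W_krv" and g: "g \<in> W_krv" for f g
  proof -
    obtain a b where ab: "krv_pair a b" "f = nu b" using f by (auto simp: W_iff)
    obtain a' b' where ab': "krv_pair a' b'" "g = nu b'" using g by (auto simp: W_iff)
    show ?thesis unfolding W_iff
      by (rule exI, rule exI, rule conjI[OF krv_add[OF ab(1) ab'(1)]]) (simp add: ab ab' nu_lin)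
  qed
  have sc: "ssc c f \<in> W_krv" if f: "f \<in> W_krv" for f c
  proof -
    obtain a b where ab: "krv_pair a b" "f = nu b" using f by (auto simp: W_iff)
    show ?thesis unfolding W_iff
      by (rule exI, rule exI, rule conjI[OF krv_ssc[OF ab(1), of c]]) (simp add: ab nu_lin)
  qed
  show ?thesis
    unfolding lie_algebra_on_def
    by (intro conjI ballI allI clos z add sc poisson_bilin poisson_jacobi)
qed


end
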